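(* In the setting below, the iterates of Algorithm PDC satisfy, for all $k\ge0$, $$\psi(y^{k+1},v^{k+1};\rho^k)\le\psi(y^k,v^k;\rho^k)-\rho^k\beta^k\|(y^{k+1}-y^k,\ v^{k+1}-v^k)\|_2^2,$$ where $\psi(y,v;\rho)=F(y,v)+\rho\,\varphi(y,v)$.
   Context: Setting. $\mathcal A$ is a finite set of links; $\mathcal V=\{\Delta h: h\ge0,\ \Lambda h=d\}\subset\mathbb R^{|\mathcal A|}$, where $\Delta$ is a 0/1 link–route incidence matrix, $\Lambda$ a 0/1 OD–route incidence matrix in which every route belongs to exactly one OD pair and every OD pair has at least one route, and $d>0$ (so $\mathcal V$ is a nonempty compact convex polytope in $\mathbb R^{|\mathcal A|}_{\ge0}$). Let $u_a\ge0$, $\mathcal Y=\{y: 0\le y_a\le u_a\ \forall a\}$, $1\le\tau\le|\mathcal A|$, $\Upsilon_\tau=\{y\in\mathcal Y: |\{a: y_a>0\}|\le\tau\}$. Standing assumptions: each $t_a(y_a,v_a)$ is continuously differentiable and strictly increasing in $v_a$ for $y_a\ge0$; each $G_a$ is nonnegative, continuously differentiable, strictly increasing, convex; $\int_0^{v_a}t_a(y_a,w)dw$ and $t_a(y_a,v_a)v_a$ are convex in $(y_a,v_a)$. With $\eta>0$: $F(y,v)=\sum_a t_a(y_a,v_a)v_a+\eta\sum_aG_a(y_a)$, $f(y,v)=\sum_a\int_0^{v_a}t_a(y_a,w)dw$, $g(y)=\min_{v\in\mathcal V}f(y,v)$, $\varphi(y,v)=f(y,v)-g(y)$. $\mathcal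 V^*(y)$ is the set of $v\in\mathcal V$ with $\langle t(y,v),v'-v\rangle\ge0$ for all $v'\in\mathcal V$; it is a singleton equal to $\arg\min_{v\in\mathcal V}f(y,v)$. Known fact: $g$ is convex and continuously differentiable on $\mathcal Y$. Define $\Phi(y,v;\bar y,\bar v)=f(y,v)-g(\bar y)-\nabla g(\bar y)^{\mathsf T}(y-\bar y)$ and, for given $\rho^k,\beta^k>0$ and $(y^k,v^k)$, $\Psi^k(y,v)=F(y,v)+\rho^k\Phi(y,v;y^k,v^k)+\rho^k\beta^k\|(y-y^k,v-v^k)\|_2^2$. Algorithm AMA with inputs $(\rho^k,\beta^k,y^k,v^k;y^{k,0})$: for $j=0,1,\dots$: $v^{k,j+1}$ = unique minimizer of $\Psi^k(y^{k,j},\cdot)$ over $\mathcal V$; $y^{k,j+1}$ = a minimizer of $\Psi^k(\cdot,v^{k,j+1})$ over $\Upsilon_\tau$; stop if $(y^{k,j+1},v^{k,j+1})$ is partially optimal (i.e. $\Psi^k(y^{k,j+1},v^{k,j+1})\le\Psi^k(y^{k,j+1},v)\ \forall v\in\mathcal V$ and $\le\Psi^k(y,v^{k,j+1})\ \forall y\in\Upsilon_\tau$). $\mathrm{AMA}(\cdot)$ denotes the returned point if it stops, otherwise any accumulation point of its iterates. Algorithm PDC with parameters $\epsilon_1,\epsilon_2,\epsilon_3>0$, $0<\theta_l<\theta_u$, $\rho^0>0$, $\sigma>1$, $y^0\in\Upsilon_\tau$: set $v^0\in\mathcal V^*(y^0)$ and choose $\beta^0\in[\theta_l/\rho^0,\theta_u/\rho^0]$;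 for $k=0,1,\dots$: (i) $(y^{k+1},v^{k+1})=\mathrm{AMA}(\rho^k,\beta^k,y^k,v^k;y^k)$; (ii) if $\|y^{k+1}-y^k\|_2\le\epsilon_1$, $\|v^{k+1}-v^k\|_2\le\epsilon_2$ and $\Phi(y^{k+1},v^{k+1};y^k,v^k)\le\epsilon_3$, stop and return $(y^{k+1},v^{k+1})$; (iii) set $\rho^{k+1}=\sigma\rho^k$ if $\Phi(y^{k+1},v^{k+1};y^k,v^k)>\epsilon_3$, else $\rho^{k+1}=\rho^k$; (iv) choose $\beta^{k+1}\in[\theta_l/\rho^{k+1},\theta_u/\rho^{k+1}]$. *)

theory Defs
  imports "HOL-Analysis.Analysis"
begin

text \<open>Links are the finite type 'a, routes the finite type 'r, OD pairs the finite type 'w.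
  Link vectors live in real^'a. Delta is the link-route incidence matrix, Lambda the
  OD-route incidence matrix.\<close>

definition flowset ::
  "('a::finite \<Rightarrow> 'r::finite \<Rightarrow> real) \<Rightarrow> ('w::finite \<Rightarrow> 'r \<Rightarrow> real) \<Rightarrow> ('w \<Rightarrow> real) \<Rightarrow> (real^'a) set" where
  "flowset Delta Lambda d =
     {v. \<exists>h::'r \<Rightarrow> real. (\<forall>r. 0 \<le> h r) \<and> (\<forall>w. (\<Sum>r\<in>UNIV. Lambda w r * h r) = d w)
          \<and> v = (\<chi> a. \<Sum>r\<in>UNIV. Delta a r * h r)}"

definition boxset :: "real^'a::finite \<Rightarrow> (real^'a) set" where
  "boxset u = {y. \<forall>a. 0 \<le> y$a \<and> y$a \<le> u$a}"

definition sparse_box :: "real^'a::finite \<Rightarrow> nat \<Rightarrow> (real^'a) set" where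
  "sparse_box u \<tau> = {y \<in> boxset u. card {a. 0 < y$a} \<le> \<tau>}"

definition Fobj :: "('a::finite \<Rightarrow> real \<Rightarrow> real \<Rightarrow> real) \<Rightarrow> ('a \<Rightarrow> real \<Rightarrow> real) \<Rightarrow> real
     \<Rightarrow> real^'a \<Rightarrow> real^'a \<Rightarrow> real" where
  "Fobj t G \<eta> y v = (\<Sum>a\<in>UNIV. t a (y$a) (v$a) * v$a) + \<eta> * (\<Sum>a\<in>UNIV. G a (y$a))"

definition fpot :: "('a::finite \<Rightarrow> real \<Rightarrow> real \<Rightarrow> real) \<Rightarrow> real^'a \<Rightarrow> real^'a \<Rightarrow> real" where
  "fpot t y v = (\<Sum>a\<in>UNIV. integral {0..v$a} (t a (y$a)))"

definition gval :: "('a::finite \<Rightarrow> real \<Rightarrow> real \<Rightarrow> real) \<Rightarrow> (real^'a) set \<Rightarrow> real^'a \<Rightarrow> real" where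
  "gval t V y = (INF v\<in>V. fpot t y v)"

definition phi :: "('a::finite \<Rightarrow> real \<Rightarrow> real \<Rightarrow> real) \<Rightarrow> (real^'a) set \<Rightarrow> real^'a \<Rightarrow> real^'a \<Rightarrow> real" where
  "phi t V y v = fpot t y v - gval t V y"

definition Phi :: "('a::finite \<Rightarrow> real \<Rightarrow> real \<Rightarrow> real) \<Rightarrow> (real^'a) set \<Rightarrow> (real^'a \<Rightarrow> real^'a)
     \<Rightarrow> real^'a \<Rightarrow> real^'a \<Rightarrow> real^'a \<Rightarrow> real^'a \<Rightarrow> real" where
  "Phi t V gradg y v yb vb = fpot t y v - gval t V yb - gradg yb \<bullet> (y - yb)"

definition Psik :: "('a::finite \<Rightarrow> real \<Rightarrow> real \<Rightarrow> real) \<Rightarrow> ('a \<Rightarrow> real \<Rightarrow> real) \<Rightarrow> real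
     \<Rightarrow> (real^'a) set \<Rightarrow> (real^'a \<Rightarrow> real^'a) \<Rightarrow> real \<Rightarrow> real \<Rightarrow> real^'a \<Rightarrow> real^'a
     \<Rightarrow> real^'a \<Rightarrow> real^'a \<Rightarrow> real" where
  "Psik t G \<eta> V gradg \<rho> \<beta> yk vk y v =
     Fobj t G \<eta> y v + \<rho> * Phi t V gradg y v yk vk + \<rho> * \<beta> * (norm (y - yk, v - vk))\<^sup>2"

definition psi :: "('a::finite \<Rightarrow> real \<Rightarrow> real \<Rightarrow> real) \<Rightarrow> ('a \<Rightarrow> real \<Rightarrow> real) \<Rightarrow> real
     \<Rightarrow> (real^'a) set \<Rightarrow> real^'a \<Rightarrow> real^'a \<Rightarrow> real \<Rightarrow> real" where
  "psi t G \<eta> V y v \<rho> = Fobj t G \<eta> y v + \<rho> * phi t V y v"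

definition VI_sol :: "('a::finite \<Rightarrow> real \<Rightarrow> real \<Rightarrow> real) \<Rightarrow> (real^'a) set \<Rightarrow> real^'a \<Rightarrow> (real^'a) set" where
  "VI_sol t V y = {v \<in> V. \<forall>v'\<in>V. 0 \<le> (\<Sum>a\<in>UNIV. t a (y$a) (v$a) * (v'$a - v$a))}"

definition partially_optimal :: "('y \<Rightarrow> 'v \<Rightarrow> real) \<Rightarrow> 'y set \<Rightarrow> 'v set \<Rightarrow> 'y \<Rightarrow> 'v \<Rightarrow> bool" where
  "partially_optimal P Y V y v \<longleftrightarrow> (\<forall>v'\<in>V. P y v \<le> P y v') \<and> (\<forall>y'\<in>Y. P y v \<le> P y' v)"

definition ama_steps :: "('y \<Rightarrow> 'v \<Rightarrow> real) \<Rightarrow> 'y set \<Rightarrow> 'v set \<Rightarrow> 'y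
     \<Rightarrow> (nat \<Rightarrow> 'y) \<Rightarrow> (nat \<Rightarrow> 'v) \<Rightarrow> nat \<Rightarrow> bool" where
  "ama_steps P Y V y0 ys vs n \<longleftrightarrow> ys 0 = y0 \<and>
     (\<forall>j<n. vs (Suc j) \<in> V \<and> (\<forall>v\<in>V. P (ys j) (vs (Suc j)) \<le> P (ys j) v)
          \<and> ys (Suc j) \<in> Y \<and> (\<forall>y\<in>Y. P (ys (Suc j)) (vs (Suc j)) \<le> P y (vs (Suc j))))"

text \<open>p is a possible output of AMA started at y0: the returned point if it stops,
  otherwise an accumulation point of the (infinite) iterate sequence.\<close>
definition ama_output :: "('y::topological_space \<Rightarrow> 'v::topological_space \<Rightarrow> real) \<Rightarrow> 'y set \<Rightarrow> 'v set \<Rightarrow> 'y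
     \<Rightarrow> 'y \<times> 'v \<Rightarrow> bool" where
  "ama_output P Y V y0 p \<longleftrightarrow>
     (\<exists>ys vs J. 0 < J \<and> ama_steps P Y V y0 ys vs J \<and> partially_optimal P Y V (ys J) (vs J)
        \<and> (\<forall>j. 0 < j \<and> j < J \<longrightarrow> \<not> partially_optimal P Y V (ys j) (vs j))
        \<and> p = (ys J, vs J))
   \<or> (\<exists>ys vs. (\<forall>n. ama_steps P Y V y0 ys vs n)
        \<and> (\<forall>j>0. \<not> partially_optimal P Y V (ys j) (vs j))
        \<and> (\<exists>r. strict_mono r \<and> ((\<lambda>j. (ys (r j), vs (r j))) \<longlongrightarrow> p) sequentially))"

end

theory Submission
  imports Defs
begin

lemma H_cont:
  fixes T :: "real \<Rightarrow> real \<Rightarrow> real"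
  assumes cT: "continuous_on {q::real\<times>real. 0 \<le> fst q} (\<lambda>q. T (fst q) (snd q))"
  shows "continuous_on {p::real\<times>real. 0 \<le> fst p \<and> 0 \<le> snd p} (\<lambda>p. integral {0..snd p} (T (fst p)))"
proof -
  let ?Q = "{p::real\<times>real. 0 \<le> fst p \<and> 0 \<le> snd p}"
  have eq: "snd p * integral {0..1} (\<lambda>s. T (fst p) (snd p * s)) = integral {0..snd p} (T (fst p))"
    if "p \<in> ?Q" for p
  proof (cases "snd p = 0")
    case True then show ?thesis by simp
  next
    case False
    define m where "m = snd p"
    have m: "m > 0" using that False unfolding m_def by auto
    have img: "(\<lambda>x. x / m) ` {0..m} = {0..1}"
    proof
      show "(\<lambda>x. x / m) ` {0..m} \<subseteq> {0..1}" using m by auto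
      show "{0..1} \<subseteq> (\<lambda>x. x / m) ` {0..m}"
      proof
        fix x :: real assume "x \<in> {0..1}"
        then have "x * m \<in> {0..m}" "x = (x*m)/m" using m by (auto simp: mult_le_cancel_right1)
        then show "x \<in> (\<lambda>x. x / m) ` {0..m}" by blast
      qed
    qed
    have "integral ((\<lambda>x. x / m) ` {0..m}) (\<lambda>x. T (fst p) (m * x)) = (1 / \<bar>m\<bar>) *\<^sub>R integral {0..m} (T (fst p))"
      using m by (intro integral_stretch_real) auto
    then show ?thesis using m unfolding m_def[symmetric] img by simp
  qed
  have c2: "continuous_on (?Q \<times> cbox 0 1) (\<lambda>(p, s). T (fst p) (snd p * s))"
  proof -
    have "continuous_on (?Q \<times> cbox 0 1) ((\<lambda>q. T (fst q) (snd q)) \<circ> (\<lambda>(p::real\<times>real, s::real). (fst p, snd p * s)))"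
      apply (rule continuous_on_compose)
       apply (auto intro!: continuous_intros simp: split_beta)[1]
      apply (rule continuous_on_subset[OF cT])
      by auto
    then show ?thesis by (simp add: split_beta o_def)
  qed
  have "continuous_on ?Q (\<lambda>p. snd p * integral (cbox 0 1) (\<lambda>s. T (fst p) (snd p * s)))"
    by (intro continuous_intros integral_continuous_on_param c2)
  then show ?thesis
    by (rule continuous_on_cong[THEN iffD1, rotated 2]) (auto simp: eq)
qed

lemma convex_tangent:
  fixes g :: "'v::real_normed_vector \<Rightarrow> real"
  assumes cv: "convex_on S g" and cS: "convex S" and x: "x \<in> S" and y: "y \<in> S"
    and dg: "(g has_derivative D) (at x within S)"
  shows "g x + D (y - x) \<le> g y"
proof -
  define \<gamma> where "\<gamma> = (\<lambda>s::real. x + s *\<^sub>R (y - x))"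
  have gS: "\<gamma> ` {0..1} \<subseteq> S"
  proof
    fix z assume "z \<in> \<gamma> ` {0..1}"
    then obtain s where s: "s \<in> {0..1}" "z = \<gamma> s" by auto
    have "(1 - s) *\<^sub>R x + s *\<^sub>R y \<in> S" using s cS x y by (auto intro: convexD_alt)
    moreover have "(1 - s) *\<^sub>R x + s *\<^sub>R y = z" using s by (simp add: \<gamma>_def algebra_simps)
    ultimately show "z \<in> S" by simp
  qed
  have dga: "(\<gamma> has_derivative (\<lambda>s. s *\<^sub>R (y - x))) (at 0 within {0..1})"
    unfolding \<gamma>_def by (auto intro!: derivative_eq_intros)
  have g0: "\<gamma> 0 = x" by (simp add: \<gamma>_def)
  have dg': "(g has_derivative D) (at (\<gamma> 0) within \<gamma> ` {0..1})"
    using has_derivative_subset[OF dg gS] g0 by simp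
  have ch: "((g \<circ> \<gamma>) has_derivative (D \<circ> (\<lambda>s. s *\<^sub>R (y - x)))) (at 0 within {0..1})"
    by (rule diff_chain_within[OF dga dg'])
  have lin: "linear D" using dg has_derivative_linear by blast
  have "D \<circ> (\<lambda>s. s *\<^sub>R (y - x)) = (\<lambda>s. D (y - x) * s)"
    using lin by (auto simp: o_def linear_cmul)
  then have "((g \<circ> \<gamma>) has_real_derivative D (y - x)) (at 0 within {0..1})"
    using ch by (simp add: has_field_derivative_def)
  then have lim: "((\<lambda>s. ((g \<circ> \<gamma>) s - (g \<circ> \<gamma>) 0) / (s - 0)) \<longlongrightarrow> D (y - x)) (at 0 within {0..1})"
    by (simp add: has_field_derivative_iff)
  have ev: "eventually (\<lambda>s. ((g \<circ> \<gamma>) s - (g \<circ> \<gamma>) 0) / (s - 0) \<le> g y - g x) (at 0 within {0..1})"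
    unfolding eventually_at_filter
  proof (intro always_eventually allI impI)
    fix s :: real assume s: "s \<noteq> 0" "s \<in> {0..1}"
    have "g ((1 - s) *\<^sub>R x + s *\<^sub>R y) \<le> (1 - s) * g x + s * g y"
      using s x y cv by (intro convex_onD) auto
    moreover have "(1 - s) *\<^sub>R x + s *\<^sub>R y = \<gamma> s" by (simp add: \<gamma>_def algebra_simps)
    ultimately have "g (\<gamma> s) - g x \<le> s * (g y - g x)" by (simp add: algebra_simps)
    then show "((g \<circ> \<gamma>) s - (g \<circ> \<gamma>) 0) / (s - 0) \<le> g y - g x"
      using s g0 by (simp add: divide_le_eq mult.commute)
  qed
  have nt: "at (0::real) within {0..1} \<noteq> bot"
    by (simp add: at_within_Icc_at_right)
  have "D (y - x) \<le> g y - g x"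
    by (rule tendsto_upperbound[OF lim ev nt])
  then show ?thesis by simp
qed

lemma flowset_closed:
  fixes Delta :: "'a::finite \<Rightarrow> 'r::finite \<Rightarrow> real" and Lambda :: "'w::finite \<Rightarrow> 'r \<Rightarrow> real"
  assumes L01: "\<forall>w r. Lambda w r = 0 \<or> Lambda w r = 1" and L1: "\<forall>r. \<exists>w. Lambda w r = 1"
  shows "closed (flowset Delta Lambda d)"
proof -
  define H where "H = {h::real^'r. (\<forall>r. 0 \<le> h$r) \<and> (\<forall>w. (\<Sum>r\<in>UNIV. Lambda w r * h$r) = d w)}"
  define L where "L = (\<lambda>h::real^'r. (\<chi> a. \<Sum>r\<in>UNIV. Delta a r * h$r) :: real^'a)"
  define B where "B = (\<Sum>w\<in>UNIV. \<bar>d w\<bar>)"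
  have Lnn: "0 \<le> Lambda w r" for w r using L01 by (metis order_refl zero_le_one)
  have "H \<subseteq> cbox 0 (\<chi> r. B)"
  proof
    fix h assume h: "h \<in> H"
    show "h \<in> cbox 0 (\<chi> r. B)" unfolding mem_box_cart
    proof
      fix r
      obtain w where w: "Lambda w r = 1" using L1 by blast
      have "h$r = Lambda w r * h$r" using w by simp
      also have "\<dots> \<le> (\<Sum>r\<in>UNIV. Lambda w r * h$r)"
        by (rule member_le_sum) (use h Lnn in \<open>auto simp: H_def\<close>)
      also have "\<dots> = d w" using h by (auto simp: H_def)
      also have "\<dots> \<le> B"
      proof -
        have "\<bar>d w\<bar> \<le> B" unfolding B_def by (rule member_le_sum) auto
        then show ?thesis by linarith
      qed
      finally show "0 $ r \<le> h $ r \<and> h $ r \<le> (\<chi> r. B) $ r" using h by (auto simp: H_def)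
    qed
  qed
  then have bH: "bounded H" using bounded_cbox bounded_subset by blast
  have cH: "closed H"
  proof -
    have "H = (\<Inter>r. {h::real^'r. 0 \<le> h$r}) \<inter> (\<Inter>w. {h. (\<Sum>r\<in>UNIV. Lambda w r * h$r) = d w})"
      by (auto simp: H_def)
    also have "closed \<dots>"
      by (intro closed_Int closed_INT ballI closed_Collect_le closed_Collect_eq continuous_intros)
    finally show ?thesis .
  qed
  have "compact (L ` H)"
    by (rule compact_continuous_image) (auto simp: L_def compact_eq_bounded_closed bH cH intro!: continuous_intros)
  moreover have "flowset Delta Lambda d = L ` H"
  proof
    show "flowset Delta Lambda d \<subseteq> L ` H"
    proof
      fix v assume "v \<in> flowset Delta Lambda d"
      then obtain h where h: "\<forall>r. 0 \<le> h r" "\<forall>w. (\<Sum>r\<in>UNIV. Lambda w r * h r) = d w"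
        "v = (\<chi> a. \<Sum>r\<in>UNIV. Delta a r * h r)" unfolding flowset_def by blast
      have "vec_lambda h \<in> H" using h by (simp add: H_def)
      moreover have "v = L (vec_lambda h)" using h by (simp add: L_def)
      ultimately show "v \<in> L ` H" by blast
    qed
    show "L ` H \<subseteq> flowset Delta Lambda d"
      unfolding flowset_def L_def H_def by blast
  qed
  ultimately show ?thesis by (simp add: compact_imp_closed)
qed

lemma boxset_closed: "closed (boxset (u::real^'a::finite))"
proof -
  have "boxset u = (\<Inter>a. {y::real^'a. 0 \<le> y$a} \<inter> {y. y$a \<le> u$a})"
    by (auto simp: boxset_def)
  also have "closed \<dots>"
    by (intro closed_Int closed_INT ballI closed_Collect_le continuous_intros)
  finally show ?thesis .
qed

lemma boxset_convex: "convex (boxset (u::real^'a::finite))"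
  unfolding convex_alt boxset_def
proof (safe)
  fix x y :: "real^'a" and s :: real and a
  assume x: "\<forall>a. 0 \<le> x $ a \<and> x $ a \<le> u $ a" and y: "\<forall>a. 0 \<le> y $ a \<and> y $ a \<le> u $ a"
    and s: "0 \<le> s" "s \<le> 1"
  have "0 \<le> (1 - s) * x$a + s * y$a" using x y s by simp
  then show "0 \<le> ((1 - s) *\<^sub>R x + s *\<^sub>R y) $ a" by simp
  have "(1 - s) * x$a + s * y$a \<le> (1 - s) * u$a + s * u$a"
    using x y s by (intro add_mono mult_left_mono) auto
  then show "((1 - s) *\<^sub>R x + s *\<^sub>R y) $ a \<le> u $ a" by (simp add: algebra_simps)
qed

lemma sparse_box_closed: "closed (sparse_box (u::real^'a::finite) \<tau>)"
  unfolding closed_sequential_limits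
proof (intro allI impI, elim conjE)
  fix x :: "nat \<Rightarrow> real^'a" and l
  assume xs: "\<forall>n. x n \<in> sparse_box u \<tau>" and lim: "x \<longlonglongrightarrow> l"
  have lb: "l \<in> boxset u"
    using boxset_closed[of u] xs lim unfolding closed_sequential_limits sparse_box_def by blast
  have "\<forall>a\<in>{a. 0 < l$a}. eventually (\<lambda>n. 0 < x n $ a) sequentially"
  proof
    fix a assume "a \<in> {a. 0 < l$a}"
    then show "eventually (\<lambda>n. 0 < x n $ a) sequentially"
      using order_tendstoD(1)[OF tendsto_vec_nth[OF lim]] by auto
  qed
  then have "eventually (\<lambda>n. \<forall>a\<in>{a. 0 < l$a}. 0 < x n $ a) sequentially"
    by (subst eventually_ball_finite_distrib) auto
  then obtain n where n: "\<forall>a\<in>{a. 0 < l$a}. 0 < x n $ a"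
    using eventually_sequentially by auto
  have "card {a. 0 < l$a} \<le> card {a. 0 < x n $ a}"
    using n by (intro card_mono) auto
  also have "\<dots> \<le> \<tau>" using xs by (auto simp: sparse_box_def)
  finally show "l \<in> sparse_box u \<tau>" using lb by (simp add: sparse_box_def)
qed

lemma ama_steps_descent:
  assumes st: "ama_steps P Y V y0 ys vs n" and y0: "y0 \<in> Y" and v0: "v0 \<in> V"
  shows "Suc j \<le> n \<Longrightarrow> ys (Suc j) \<in> Y \<and> vs (Suc j) \<in> V \<and> P (ys (Suc j)) (vs (Suc j)) \<le> P y0 v0"
proof (induction j)
  case 0
  have s: "ys 0 = y0" "vs 1 \<in> V" "\<forall>v\<in>V. P (ys 0) (vs 1) \<le> P (ys 0) v" "ys 1 \<in> Y"
    "\<forall>y\<in>Y. P (ys 1) (vs 1) \<le> P y (vs 1)"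
    using st 0 unfolding ama_steps_def by auto
  then show ?case using y0 v0 by (metis One_nat_def order_trans)
next
  case (Suc j)
  then have IH: "ys (Suc j) \<in> Y \<and> vs (Suc j) \<in> V \<and> P (ys (Suc j)) (vs (Suc j)) \<le> P y0 v0" by simp
  have s: "vs (Suc (Suc j)) \<in> V" "\<forall>v\<in>V. P (ys (Suc j)) (vs (Suc (Suc j))) \<le> P (ys (Suc j)) v"
    "ys (Suc (Suc j)) \<in> Y" "\<forall>y\<in>Y. P (ys (Suc (Suc j))) (vs (Suc (Suc j))) \<le> P y (vs (Suc (Suc j)))"
    using st Suc.prems unfolding ama_steps_def by auto
  then show ?case using IH by (meson order_trans)
qed

lemma ama_output_descent:
  fixes P :: "'y::topological_space \<Rightarrow> 'v::topological_space \<Rightarrow> real"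
  assumes out: "ama_output P Y V y0 p" and y0: "y0 \<in> Y" and v0: "v0 \<in> V"
    and cY: "closed Y" and cV: "closed V" and cP: "continuous_on (Y \<times> V) (\<lambda>z. P (fst z) (snd z))"
  shows "fst p \<in> Y \<and> snd p \<in> V \<and> P (fst p) (snd p) \<le> P y0 v0"
  using out unfolding ama_output_def
proof (elim disjE exE conjE)
  fix ys vs J assume "0 < J" "ama_steps P Y V y0 ys vs J" "p = (ys J, vs J)"
  then show ?thesis using ama_steps_descent[of P Y V y0 ys vs J v0 "J - 1"] y0 v0 by auto
next
  fix ys vs r
  assume st: "\<forall>n. ama_steps P Y V y0 ys vs n" and r: "strict_mono r"
    and lim: "((\<lambda>j. (ys (r j), vs (r j))) \<longlongrightarrow> p) sequentially"
  have mem: "(ys (r j), vs (r j)) \<in> Y \<times> V \<and> P (ys (r j)) (vs (r j)) \<le> P y0 v0" if j1: "1 \<le> j" for j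
  proof -
    have "j \<le> r j" using r by (simp add: strict_mono_imp_increasing)
    then obtain i where i: "r j = Suc i" using j1 by (cases "r j") auto
    show ?thesis using ama_steps_descent[OF st[rule_format, of "r j"] y0 v0, of i] i by auto
  qed
  have ev: "eventually (\<lambda>j. (ys (r j), vs (r j)) \<in> Y \<times> V) sequentially"
    using mem eventually_sequentially by blast
  have pin: "p \<in> Y \<times> V"
    by (rule Lim_in_closed_set[OF closed_Times[OF cY cV] ev _ lim]) simp
  have "((\<lambda>j. P (fst (ys (r j), vs (r j))) (snd (ys (r j), vs (r j)))) \<longlongrightarrow> P (fst p) (snd p)) sequentially"
    by (rule continuous_on_tendsto_compose[OF cP lim pin ev])
  then have l2: "((\<lambda>j. P (ys (r j)) (vs (r j))) \<longlongrightarrow> P (fst p) (snd p)) sequentially" by simp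
  have "P (fst p) (snd p) \<le> P y0 v0"
    by (rule tendsto_upperbound[OF l2]) (use mem eventually_sequentially in auto)
  then show ?thesis using pin by auto
qed

lemma Psik_cont:
  fixes t :: "'a::finite \<Rightarrow> real \<Rightarrow> real \<Rightarrow> real"
  assumes tc: "\<And>a. continuous_on {q::real\<times>real. 0 \<le> fst q} (\<lambda>q. t a (fst q) (snd q))"
    and Gc: "\<And>a. continuous_on {0..} (G a)"
  shows "continuous_on {z::(real^'a)\<times>(real^'a). \<forall>a. 0 \<le> fst z $ a \<and> 0 \<le> snd z $ a}
           (\<lambda>z. Psik t G \<eta> V gradg \<rho> \<beta> yk vk (fst z) (snd z))"
proof -
  let ?D = "{z::(real^'a)\<times>(real^'a). \<forall>a. 0 \<le> fst z $ a \<and> 0 \<le> snd z $ a}"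
  have c1: "continuous_on ?D (\<lambda>z. t a (fst z $ a) (snd z $ a))" for a
    by (rule continuous_on_compose2[OF tc[of a], of ?D "\<lambda>z. (fst z $ a, snd z $ a)", simplified])
       (auto intro!: continuous_intros)
  have c2: "continuous_on ?D (\<lambda>z. G a (fst z $ a))" for a
    by (rule continuous_on_compose2[OF Gc[of a], of ?D "\<lambda>z. fst z $ a"])
       (auto intro!: continuous_intros)
  have c3: "continuous_on ?D (\<lambda>z. integral {0..snd z $ a} (t a (fst z $ a)))" for a
    by (rule continuous_on_compose2[OF H_cont[OF tc[of a]], of ?D "\<lambda>z. (fst z $ a, snd z $ a)", simplified])
       (auto intro!: continuous_intros)
  show ?thesis
    unfolding Psik_def Fobj_def Phi_def fpot_def
    by (intro continuous_intros c1 c2 c3)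
qed


theorem proposition4p3:
  fixes Delta :: "'a::finite \<Rightarrow> 'r::finite \<Rightarrow> real"
    and Lambda :: "'w::finite \<Rightarrow> 'r \<Rightarrow> real"
    and d :: "'w \<Rightarrow> real"
    and u :: "real^'a" and \<tau> :: nat
    and t :: "'a \<Rightarrow> real \<Rightarrow> real \<Rightarrow> real"
    and G :: "'a \<Rightarrow> real \<Rightarrow> real"
    and \<eta> :: real
    and gradg :: "real^'a \<Rightarrow> real^'a"
    and \<epsilon>1 \<epsilon>2 \<epsilon>3 \<theta>l \<theta>u \<rho>0 \<sigma> :: real
    and y v :: "nat \<Rightarrow> real^'a"
    and \<rho> \<beta> :: "nat \<Rightarrow> real"
  assumes Delta01: "\<forall>a r. Delta a r = 0 \<or> Delta a r = 1"
    and Lambda01: "\<forall>w r. Lambda w r = 0 \<or> Lambda w r = 1"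
    and route_one_od: "\<forall>r. \<exists>!w. Lambda w r = 1"
    and od_has_route: "\<forall>w. \<exists>r. Lambda w r = 1"
    and d_pos: "\<forall>w. 0 < d w"
    and u_nonneg: "\<forall>a. 0 \<le> u$a"
    and tau: "1 \<le> \<tau>" "\<tau> \<le> CARD('a)"
    and t_C1: "\<forall>a. \<exists>ty tv. continuous_on {p::real\<times>real. 0 \<le> fst p} ty
                  \<and> continuous_on {p::real\<times>real. 0 \<le> fst p} tv
                  \<and> (\<forall>p\<in>{p::real\<times>real. 0 \<le> fst p}.
                       ((\<lambda>q. t a (fst q) (snd q)) has_derivative (\<lambda>h. ty p * fst h + tv p * snd h))
                         (at p within {p::real\<times>real. 0 \<le> fst p}))"
    and t_incr: "\<forall>a ya. 0 \<le> ya \<longrightarrow> strict_mono (t a ya)"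
    and G_nonneg: "\<forall>a x. 0 \<le> x \<longrightarrow> 0 \<le> G a x"
    and G_C1: "\<forall>a. \<exists>G'. continuous_on {0..} G' \<and>
                  (\<forall>x\<in>{0..}. (G a has_real_derivative G' x) (at x within {0..}))"
    and G_incr: "\<forall>a. strict_mono_on {0..} (G a)"
    and G_convex: "\<forall>a. convex_on {0..} (G a)"
    and int_convex: "\<forall>a. convex_on {p::real\<times>real. 0 \<le> fst p \<and> 0 \<le> snd p}
                        (\<lambda>p. integral {0..snd p} (t a (fst p)))"
    and tv_convex: "\<forall>a. convex_on {p::real\<times>real. 0 \<le> fst p \<and> 0 \<le> snd p}
                        (\<lambda>p. t a (fst p) (snd p) * snd p)"
    and eta_pos: "0 < \<eta>"
    and g_convex: "convex_on (boxset u) (gval t (flowset Delta Lambda d))"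
    and g_grad: "\<forall>z\<in>boxset u. (gval t (flowset Delta Lambda d) has_derivative (\<lambda>h. gradg z \<bullet> h))
                               (at z within boxset u)"
    and g_grad_cont: "continuous_on (boxset u) gradg"
    and eps: "0 < \<epsilon>1" "0 < \<epsilon>2" "0 < \<epsilon>3"
    and theta: "0 < \<theta>l" "\<theta>l < \<theta>u"
    and rho0: "0 < \<rho>0" "\<rho> 0 = \<rho>0"
    and sigma: "1 < \<sigma>"
    and y0: "y 0 \<in> sparse_box u \<tau>"
    and v0: "v 0 \<in> VI_sol t (flowset Delta Lambda d) (y 0)"
    and iter: "\<forall>k. (\<forall>k'<k. \<not> (norm (y (Suc k') - y k') \<le> \<epsilon>1 \<and> norm (v (Suc k') - v k') \<le> \<epsilon>2
                         \<and> Phi t (flowset Delta Lambda d) gradg (y (Suc k')) (v (Suc k')) (y k') (v k') \<le> \<epsilon>3))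
             \<longrightarrow> \<theta>l / \<rho> k \<le> \<beta> k \<and> \<beta> k \<le> \<theta>u / \<rho> k
               \<and> ama_output (Psik t G \<eta> (flowset Delta Lambda d) gradg (\<rho> k) (\<beta> k) (y k) (v k))
                    (sparse_box u \<tau>) (flowset Delta Lambda d) (y k) (y (Suc k), v (Suc k))
               \<and> \<rho> (Suc k) = (if Phi t (flowset Delta Lambda d) gradg (y (Suc k)) (v (Suc k)) (y k) (v k) > \<epsilon>3
                               then \<sigma> * \<rho> k else \<rho> k)"
  shows "\<forall>k. (\<forall>k'<k. \<not> (norm (y (Suc k') - y k') \<le> \<epsilon>1 \<and> norm (v (Suc k') - v k') \<le> \<epsilon>2
                         \<and> Phi t (flowset Delta Lambda d) gradg (y (Suc k')) (v (Suc k')) (y k') (v k') \<le> \<epsilon>3))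
          \<longrightarrow> psi t G \<eta> (flowset Delta Lambda d) (y (Suc k)) (v (Suc k)) (\<rho> k)
              \<le> psi t G \<eta> (flowset Delta Lambda d) (y k) (v k) (\<rho> k)
                 - \<rho> k * \<beta> k * (norm (y (Suc k) - y k, v (Suc k) - v k))\<^sup>2"
proof -
  define V where "V = flowset Delta Lambda d"
  define Y where "Y = sparse_box u \<tau>"
  define Q where "Q = (\<lambda>k. \<forall>k'<k. \<not> (norm (y (Suc k') - y k') \<le> \<epsilon>1 \<and> norm (v (Suc k') - v k') \<le> \<epsilon>2
                         \<and> Phi t (flowset Delta Lambda d) gradg (y (Suc k')) (v (Suc k')) (y k') (v k') \<le> \<epsilon>3))"
  have QS: "Q (Suc k) \<Longrightarrow> Q k" for k unfolding Q_def by auto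
  have tc: "continuous_on {q::real\<times>real. 0 \<le> fst q} (\<lambda>q. t a (fst q) (snd q))" for a
  proof -
    obtain ty tv where h: "\<forall>p\<in>{p::real\<times>real. 0 \<le> fst p}.
                       ((\<lambda>q. t a (fst q) (snd q)) has_derivative (\<lambda>h. ty p * fst h + tv p * snd h))
                         (at p within {p::real\<times>real. 0 \<le> fst p})"
      using t_C1 by blast
    show ?thesis unfolding continuous_on_eq_continuous_within
    proof
      fix p assume p: "p \<in> {p::real\<times>real. 0 \<le> fst p}"
      show "continuous (at p within {p::real\<times>real. 0 \<le> fst p}) (\<lambda>q. t a (fst q) (snd q))"
        by (rule has_derivative_continuous[OF h[rule_format, OF p]])
    qed
  qed
  have Gc: "continuous_on {0..} (G a)" for a
  proof -
    obtain G' where h: "\<forall>x\<in>{0..}. (G a has_real_derivative G' x) (at x within {0..})"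
      using G_C1 by blast
    show ?thesis unfolding continuous_on_eq_continuous_within
    proof
      fix x :: real assume x: "x \<in> {0..}"
      show "continuous (at x within {0..}) (G a)"
        by (rule DERIV_continuous[OF h[rule_format, OF x]])
    qed
  qed
  have cV: "closed V" unfolding V_def
  proof (rule flowset_closed[OF Lambda01])
    show "\<forall>r. \<exists>w. Lambda w r = 1" using route_one_od by blast
  qed
  have cY: "closed Y" unfolding Y_def by (rule sparse_box_closed)
  have Ynn: "0 \<le> z $ a" if "z \<in> Y" for z a
  proof -
    have "z \<in> boxset u" using that by (simp add: Y_def sparse_box_def)
    then show ?thesis by (simp add: boxset_def)
  qed
  have Ybox: "Y \<subseteq> boxset u" unfolding Y_def sparse_box_def by blast
  have Vnn: "0 \<le> z $ a" if "z \<in> V" for z a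
  proof -
    have "\<exists>h::'r \<Rightarrow> real. (\<forall>r. 0 \<le> h r) \<and> (\<forall>w. (\<Sum>r\<in>UNIV. Lambda w r * h r) = d w)
          \<and> z = (\<chi> a. \<Sum>r\<in>UNIV. Delta a r * h r)"
      using that unfolding V_def flowset_def mem_Collect_eq .
    then obtain h :: "'r \<Rightarrow> real" where h: "\<forall>r. 0 \<le> h r" "z = (\<chi> a. \<Sum>r\<in>UNIV. Delta a r * h r)"
      by (elim exE conjE)
    have D: "0 \<le> Delta a r" for r using Delta01 by (metis order_refl zero_le_one)
    have "0 \<le> (\<Sum>r\<in>UNIV. Delta a r * h r)"
      by (rule sum_nonneg) (simp add: D h(1))
    then show ?thesis unfolding h(2) by simp
  qed
  have cP: "continuous_on (Y \<times> V) (\<lambda>z. Psik t G \<eta> V gradg r b yk vk (fst z) (snd z))" for r b yk vk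
    by (rule continuous_on_subset[OF Psik_cont[OF tc Gc]]) (auto intro: Ynn Vnn)
  have step: "fst p \<in> Y \<and> snd p \<in> V \<and>
      Psik t G \<eta> V gradg (\<rho> k) (\<beta> k) (y k) (v k) (fst p) (snd p)
        \<le> Psik t G \<eta> V gradg (\<rho> k) (\<beta> k) (y k) (v k) (y k) (v k)"
    if "ama_output (Psik t G \<eta> V gradg (\<rho> k) (\<beta> k) (y k) (v k)) Y V (y k) p" "y k \<in> Y" "v k \<in> V" for k p
    by (rule ama_output_descent[OF that cY cV cP])
  have I: "ama_output (Psik t G \<eta> V gradg (\<rho> k) (\<beta> k) (y k) (v k)) Y V (y k) (y (Suc k), v (Suc k))
      \<and> \<rho> (Suc k) = (if Phi t (flowset Delta Lambda d) gradg (y (Suc k)) (v (Suc k)) (y k) (v k) > \<epsilon>3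
                               then \<sigma> * \<rho> k else \<rho> k)" if qk: "Q k" for k
  proof -
    have q': "\<forall>k'<k. \<not> (norm (y (Suc k') - y k') \<le> \<epsilon>1 \<and> norm (v (Suc k') - v k') \<le> \<epsilon>2
                         \<and> Phi t (flowset Delta Lambda d) gradg (y (Suc k')) (v (Suc k')) (y k') (v k') \<le> \<epsilon>3)"
      using qk unfolding Q_def .
    note mp[OF spec[OF iter, of k] q']
    then show ?thesis unfolding V_def Y_def by (elim conjE) (intro conjI)
  qed
  have inv: "Q k \<longrightarrow> y k \<in> Y \<and> v k \<in> V \<and> 0 < \<rho> k" for k
  proof (induction k)
    case 0
    have "v 0 \<in> V" using v0 unfolding VI_sol_def V_def by blast
    moreover have "y 0 \<in> Y" using y0 unfolding Y_def .
    ultimately show ?case using rho0 by simp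
  next
    case (Suc k)
    show ?case
    proof
      assume q: "Q (Suc k)"
      then have qk: "Q k" by (rule QS)
      then have IH: "y k \<in> Y" "v k \<in> V" "0 < \<rho> k" using Suc.IH by blast+
      have it: "ama_output (Psik t G \<eta> V gradg (\<rho> k) (\<beta> k) (y k) (v k)) Y V (y k) (y (Suc k), v (Suc k))"
        "\<rho> (Suc k) = (if Phi t (flowset Delta Lambda d) gradg (y (Suc k)) (v (Suc k)) (y k) (v k) > \<epsilon>3
                               then \<sigma> * \<rho> k else \<rho> k)"
        using I[OF qk] by blast+
      have sp: "0 < \<sigma> * \<rho> k" using IH(3) sigma by (intro mult_pos_pos) auto
      have "0 < \<rho> (Suc k)" unfolding it(2) using IH(3) sp by simp
      then show "y (Suc k) \<in> Y \<and> v (Suc k) \<in> V \<and> 0 < \<rho> (Suc k)"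
        using step[OF it(1) IH(1,2)] by simp
    qed
  qed
  show ?thesis
  proof (intro allI impI)
    fix k
    assume q0: "\<forall>k'<k. \<not> (norm (y (Suc k') - y k') \<le> \<epsilon>1 \<and> norm (v (Suc k') - v k') \<le> \<epsilon>2
                         \<and> Phi t (flowset Delta Lambda d) gradg (y (Suc k')) (v (Suc k')) (y k') (v k') \<le> \<epsilon>3)"
    then have qk: "Q k" unfolding Q_def by blast
    then have IH: "y k \<in> Y" "v k \<in> V" "0 < \<rho> k" using inv by blast+
    have it: "ama_output (Psik t G \<eta> V gradg (\<rho> k) (\<beta> k) (y k) (v k)) Y V (y k) (y (Suc k), v (Suc k))"
      using I[OF qk] by blast
    note st = step[OF it IH(1,2), simplified]
    let ?N = "(norm (y (Suc k) - y k, v (Suc k) - v k))\<^sup>2"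
    have yk: "y k \<in> boxset u" using Ybox IH(1) by blast
    have yk1: "y (Suc k) \<in> boxset u" using Ybox st by blast
    have tan0: "gval t V (y k) + (\<lambda>h. gradg (y k) \<bullet> h) (y (Suc k) - y k) \<le> gval t V (y (Suc k))"
      by (rule convex_tangent[OF g_convex[folded V_def] boxset_convex yk yk1 g_grad[folded V_def, rule_format, OF yk]])
    then have tan: "gval t V (y k) + gradg (y k) \<bullet> (y (Suc k) - y k) \<le> gval t V (y (Suc k))" by simp
    have "psi t G \<eta> V (y (Suc k)) (v (Suc k)) (\<rho> k)
        \<le> Psik t G \<eta> V gradg (\<rho> k) (\<beta> k) (y k) (v k) (y (Suc k)) (v (Suc k)) - \<rho> k * \<beta> k * ?N"
    proof -
      have "\<rho> k * (gval t V (y k) + gradg (y k) \<bullet> (y (Suc k) - y k)) \<le> \<rho> k * gval t V (y (Suc k))"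
        using tan IH(3) by (simp add: mult_left_mono)
      then show ?thesis unfolding psi_def Psik_def phi_def Phi_def by (simp add: algebra_simps)
    qed
    also have "\<dots> \<le> Psik t G \<eta> V gradg (\<rho> k) (\<beta> k) (y k) (v k) (y k) (v k) - \<rho> k * \<beta> k * ?N"
      using st by simp
    also have "Psik t G \<eta> V gradg (\<rho> k) (\<beta> k) (y k) (v k) (y k) (v k) = psi t G \<eta> V (y k) (v k) (\<rho> k)"
      unfolding psi_def Psik_def phi_def Phi_def by simp
    finally show "psi t G \<eta> (flowset Delta Lambda d) (y (Suc k)) (v (Suc k)) (\<rho> k)
              \<le> psi t G \<eta> (flowset Delta Lambda d) (y k) (v k) (\<rho> k) - \<rho> k * \<beta> k * ?N"
      unfolding V_def .
  qed
qed

end
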